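(* Let $(X_B,X_C,X_R)$ be an OCC (not necessarily tight) in a graph $G$ and let $(A_B,A_C,A_R)$ be a tight OCC in $G$. Let $f_X\colon X_B \to \{0,1\}$ and $f_A \colon A_B \to \{0,1\}$ be proper $2$-colorings of $G[X_B]$ and $G[A_B]$ respectively. Define the following subsets of $X_B$: $A := \{ b \in X_B : b$ has a neighbor $c \in X_C \cap A_B$ with $f_X(b) = f_A(c)\}$, $R := \{ b \in X_B : b$ has a neighbor $c \in X_C \cap A_B$ with $f_X(b) \neq f_A(c)\}$, $N := N_G(X_C \cap A_R) \cap X_B$. Then $A_C \cap X_B$ is both a minimum-size $\{A,R\}$-separator and a minimum-size $\{A,R,N\}$-separator in $G[X_B]$.
   Context: An OCT of $G$ is a set $S \subseteq V(G)$ with $G - S$ bipartite; $\mathrm{oct}(G)$ is its minimum size. An odd cycle cut (OCC) of $G$ is a partition $(X_B, X_C, X_R)$ of $V(G)$ such that $G[X_B]$ is bipartite, there is no edge between $X_B$ and $X_R$, and $X_B \cup X_C \neq \emptyset$. It is tight if $|X_C| = \mathrm{oct}(G[X_B \cup X_C])$. A vertex set $X$ separates two (not necessarily disjoint) vertex sets $S,T$ in a graph if no connected component of the graph minus $X$ contains both a vertex of $S$ and a vertex of $T$; $X$ may intersect $S \cup T$. For sets $T_1,\dots,T_m$, a $\{T_1,\dots,T_m\}$-separator is a vertex set separating $T_i$ and $T_j$ for all $i \neq j$. The sets $A,R,N$ may overlap. *)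

theory Defs
  imports Main
begin

definition graph :: "'a set \<Rightarrow> ('a \<Rightarrow> 'a \<Rightarrow> bool) \<Rightarrow> bool" where
  "graph V E \<longleftrightarrow> finite V \<and> (\<forall>u v. E u v \<longrightarrow> E v u) \<and> (\<forall>u. \<not> E u u)
     \<and> (\<forall>u v. E u v \<longrightarrow> u \<in> V \<and> v \<in> V)"

text \<open>Proper 2-colouring of the induced subgraph G[S] (colours 0/1 encoded as bool).\<close>
definition proper_2col :: "('a \<Rightarrow> 'a \<Rightarrow> bool) \<Rightarrow> 'a set \<Rightarrow> ('a \<Rightarrow> bool) \<Rightarrow> bool" where
  "proper_2col E S f \<longleftrightarrow> (\<forall>u\<in>S. \<forall>v\<in>S. E u v \<longrightarrow> f u \<noteq> f v)"

definition bipartite_on :: "('a \<Rightarrow> 'a \<Rightarrow> bool) \<Rightarrow> 'a set \<Rightarrow> bool" where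
  "bipartite_on E S \<longleftrightarrow> (\<exists>f. proper_2col E S f)"

definition oct :: "('a \<Rightarrow> 'a \<Rightarrow> bool) \<Rightarrow> 'a set \<Rightarrow> nat" where
  "oct E S = Min {card X | X. X \<subseteq> S \<and> bipartite_on E (S - X)}"

definition OCC :: "'a set \<Rightarrow> ('a \<Rightarrow> 'a \<Rightarrow> bool) \<Rightarrow> 'a set \<Rightarrow> 'a set \<Rightarrow> 'a set \<Rightarrow> bool" where
  "OCC V E XB XC XR \<longleftrightarrow> XB \<union> XC \<union> XR = V \<and> XB \<inter> XC = {} \<and> XB \<inter> XR = {}
     \<and> XC \<inter> XR = {} \<and> bipartite_on E XB
     \<and> (\<forall>u\<in>XB. \<forall>v\<in>XR. \<not> E u v) \<and> XB \<union> XC \<noteq> {}"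

definition tight_OCC :: "'a set \<Rightarrow> ('a \<Rightarrow> 'a \<Rightarrow> bool) \<Rightarrow> 'a set \<Rightarrow> 'a set \<Rightarrow> 'a set \<Rightarrow> bool" where
  "tight_OCC V E XB XC XR \<longleftrightarrow> OCC V E XB XC XR \<and> card XC = oct E (XB \<union> XC)"

definition nbhd :: "('a \<Rightarrow> 'a \<Rightarrow> bool) \<Rightarrow> 'a set \<Rightarrow> 'a set" where
  "nbhd E S = {v. \<exists>u\<in>S. E u v}"

definition conn_in :: "('a \<Rightarrow> 'a \<Rightarrow> bool) \<Rightarrow> 'a set \<Rightarrow> 'a \<Rightarrow> 'a \<Rightarrow> bool" where
  "conn_in E W s t \<longleftrightarrow> s \<in> W \<and> t \<in> W \<and> (\<lambda>u v. E u v \<and> u \<in> W \<and> v \<in> W)\<^sup>*\<^sup>* s t"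

definition separates :: "('a \<Rightarrow> 'a \<Rightarrow> bool) \<Rightarrow> 'a set \<Rightarrow> 'a set \<Rightarrow> 'a set \<Rightarrow> 'a set \<Rightarrow> bool" where
  "separates E W X S T \<longleftrightarrow> (\<forall>s\<in>S. \<forall>t\<in>T. \<not> conn_in E (W - X) s t)"

text \<open>X is a {T_1,...,T_m}-separator in G[W] (X a vertex set of G[W]); the family is
given as a list, so distinct indices are required to be separated even if sets coincide.\<close>
definition family_sep :: "('a \<Rightarrow> 'a \<Rightarrow> bool) \<Rightarrow> 'a set \<Rightarrow> 'a set list \<Rightarrow> 'a set \<Rightarrow> bool" where
  "family_sep E W Ts X \<longleftrightarrow> X \<subseteq> W \<and>
     (\<forall>i<length Ts. \<forall>j<length Ts. i \<noteq> j \<longrightarrow> separates E W X (Ts ! i) (Ts ! j))"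

definition min_family_sep :: "('a \<Rightarrow> 'a \<Rightarrow> bool) \<Rightarrow> 'a set \<Rightarrow> 'a set list \<Rightarrow> 'a set \<Rightarrow> bool" where
  "min_family_sep E W Ts X \<longleftrightarrow> family_sep E W Ts X \<and>
     (\<forall>Y. family_sep E W Ts Y \<longrightarrow> card X \<le> card Y)"

end

theory Submission
  imports Defs
begin

lemma inv_AB:
  assumes g: "graph V E" and occ: "OCC V E AB AC AR"
    and pX: "proper_2col E XB fX" and pA: "proper_2col E AB fA"
    and st: "(\<lambda>u v. E u v \<and> u \<in> W \<and> v \<in> W)\<^sup>*\<^sup>* s t"
    and W: "W \<subseteq> XB - AC" and s: "s \<in> AB"
  shows "t \<in> AB \<and> ((fX t \<noteq> fA t) = (fX s \<noteq> fA s))"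
  using st
proof (induction rule: rtranclp_induct)
  case base
  then show ?case using s by simp
next
  case (step y z)
  have "E y z" "y \<in> W" "z \<in> W" using step by auto
  have "z \<in> V" using g \<open>E y z\<close> unfolding graph_def by blast
  have "z \<notin> AR" using occ step \<open>E y z\<close> unfolding OCC_def by blast
  moreover have "z \<notin> AC" using W \<open>z \<in> W\<close> by blast
  ultimately have "z \<in> AB" using occ \<open>z \<in> V\<close> unfolding OCC_def by blast
  have "fX y \<noteq> fX z" using pX W \<open>y \<in> W\<close> \<open>z \<in> W\<close> \<open>E y z\<close> unfolding proper_2col_def by blast
  have "fA y \<noteq> fA z" using pA step \<open>z \<in> AB\<close> \<open>E y z\<close> unfolding proper_2col_def by blast
  show ?case using step \<open>z \<in> AB\<close> \<open>fX y \<noteq> fX z\<close> \<open>fA y \<noteq> fA z\<close> by auto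
qed

lemma inv_AR:
  assumes g: "graph V E" and occ: "OCC V E AB AC AR"
    and st: "(\<lambda>u v. E u v \<and> u \<in> W \<and> v \<in> W)\<^sup>*\<^sup>* s t"
    and W: "W \<subseteq> XB - AC" and s: "s \<in> AR"
  shows "t \<in> AR"
  using st
proof (induction rule: rtranclp_induct)
  case base
  then show ?case using s by simp
next
  case (step y z)
  have "E y z" "y \<in> W" "z \<in> W" using step by auto
  have "E z y" using g \<open>E y z\<close> unfolding graph_def by blast
  have "z \<in> V" using g \<open>E y z\<close> unfolding graph_def by blast
  have "z \<notin> AB" using occ step \<open>E z y\<close> unfolding OCC_def by blast
  moreover have "z \<notin> AC" using W \<open>z \<in> W\<close> by blast
  ultimately show "z \<in> AR" using occ \<open>z \<in> V\<close> unfolding OCC_def by blast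
qed

theorem lemma3p5:
  fixes V :: "'a set" and E :: "'a \<Rightarrow> 'a \<Rightarrow> bool"
    and XB XC XR AB AC AR :: "'a set" and fX fA :: "'a \<Rightarrow> bool"
  assumes "graph V E"
    and "OCC V E XB XC XR"
    and "tight_OCC V E AB AC AR"
    and "proper_2col E XB fX"
    and "proper_2col E AB fA"
  defines "A \<equiv> {b \<in> XB. \<exists>c \<in> XC \<inter> AB. E b c \<and> fX b = fA c}"
    and "R \<equiv> {b \<in> XB. \<exists>c \<in> XC \<inter> AB. E b c \<and> fX b \<noteq> fA c}"
    and "N \<equiv> nbhd E (XC \<inter> AR) \<inter> XB"
  shows "min_family_sep E XB [A, R] (AC \<inter> XB) \<and> min_family_sep E XB [A, R, N] (AC \<inter> XB)"
proof -
  note g = assms(1) and occX = assms(2) and pX = assms(4) and pA = assms(5)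
  have occ: "OCC V E AB AC AR" using assms(3) unfolding tight_OCC_def by blast
  have tight: "card AC = oct E (AB \<union> AC)" using assms(3) unfolding tight_OCC_def by blast
  have sym: "\<And>u v. E u v \<Longrightarrow> E v u" using g unfolding graph_def by blast
  have inV: "\<And>u v. E u v \<Longrightarrow> u \<in> V \<and> v \<in> V" using g unfolding graph_def by blast
  have finV: "finite V" using g unfolding graph_def by blast
  have noBR: "\<And>u v. u \<in> AB \<Longrightarrow> v \<in> AR \<Longrightarrow> \<not> E u v" using occ unfolding OCC_def by blast
  have partA: "\<And>v. v \<in> V \<Longrightarrow> v \<in> AB \<or> v \<in> AC \<or> v \<in> AR" using occ unfolding OCC_def by blast
  have XBV: "XB \<subseteq> V" using occX unfolding OCC_def by blast
  define W where "W = XB - AC \<inter> XB"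
  have W: "W \<subseteq> XB - AC" unfolding W_def by blast
  have A_AB: "s \<in> AB \<and> fX s \<noteq> fA s" if h: "s \<in> A" "s \<in> W" for s
  proof -
    obtain c where c: "c \<in> XC \<inter> AB" "E s c" "fX s = fA c" using h unfolding A_def by blast
    have "s \<in> V" using inV c by blast
    have "s \<notin> AR" using noBR[of c s] c sym by blast
    hence "s \<in> AB" using partA \<open>s \<in> V\<close> h W by blast
    moreover have "fA s \<noteq> fA c" using pA c \<open>s \<in> AB\<close> unfolding proper_2col_def by blast
    ultimately show ?thesis using c by simp
  qed
  have R_AB: "s \<in> AB \<and> fX s = fA s" if h: "s \<in> R" "s \<in> W" for s
  proof -
    obtain c where c: "c \<in> XC \<inter> AB" "E s c" "fX s \<noteq> fA c" using h unfolding R_def by blast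
    have "s \<in> V" using inV c by blast
    have "s \<notin> AR" using noBR[of c s] c sym by blast
    hence "s \<in> AB" using partA \<open>s \<in> V\<close> h W by blast
    moreover have "fA s \<noteq> fA c" using pA c \<open>s \<in> AB\<close> unfolding proper_2col_def by blast
    ultimately show ?thesis using c by auto
  qed
  have N_AR: "s \<in> AR" if h: "s \<in> N" "s \<in> W" for s
  proof -
    obtain d where d: "d \<in> XC \<inter> AR" "E d s" using h unfolding N_def nbhd_def by blast
    have "s \<in> V" using inV d by blast
    have "s \<notin> AB" using noBR[of s d] d sym by blast
    thus ?thesis using partA \<open>s \<in> V\<close> h W by blast
  qed
  have AB_notN: "t \<notin> N" if "t \<in> AB" for t
  proof
    assume "t \<in> N"
    then obtain d where d: "d \<in> XC \<inter> AR" "E d t" unfolding N_def nbhd_def by blast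
    thus False using noBR[of t d] sym that by blast
  qed
  have AR_notAR: "t \<notin> A \<and> t \<notin> R" if "t \<in> AR" for t
  proof -
    have "\<not> E t c" if "c \<in> AB" for c using noBR[of c t] sym \<open>t \<in> AR\<close> that by blast
    thus ?thesis unfolding A_def R_def by blast
  qed
  let ?P = "\<lambda>u v. E u v \<and> u \<in> W \<and> v \<in> W"
  have conn: "?P\<^sup>*\<^sup>* s t \<and> s \<in> W \<and> t \<in> W" if "conn_in E (XB - AC \<inter> XB) s t" for s t
    using that unfolding conn_in_def W_def by blast
  have sAR: "separates E XB (AC \<inter> XB) A R"
    unfolding separates_def
  proof (intro ballI notI)
    fix s t assume "s \<in> A" "t \<in> R" "conn_in E (XB - AC \<inter> XB) s t"
    hence c: "?P\<^sup>*\<^sup>* s t" "s \<in> W" "t \<in> W" using conn by auto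
    have "s \<in> AB \<and> fX s \<noteq> fA s" using A_AB \<open>s \<in> A\<close> c by blast
    hence "fX t \<noteq> fA t" using inv_AB[OF g occ pX pA c(1) W] by blast
    thus False using R_AB \<open>t \<in> R\<close> c by blast
  qed
  have sRA: "separates E XB (AC \<inter> XB) R A"
    unfolding separates_def
  proof (intro ballI notI)
    fix s t assume "s \<in> R" "t \<in> A" "conn_in E (XB - AC \<inter> XB) s t"
    hence c: "?P\<^sup>*\<^sup>* s t" "s \<in> W" "t \<in> W" using conn by auto
    have "s \<in> AB \<and> fX s = fA s" using R_AB \<open>s \<in> R\<close> c by blast
    hence "fX t = fA t" using inv_AB[OF g occ pX pA c(1) W] by blast
    thus False using A_AB \<open>t \<in> A\<close> c by blast
  qed
  have sXN: "separates E XB (AC \<inter> XB) S N" if "S = A \<or> S = R" for S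
    unfolding separates_def
  proof (intro ballI notI)
    fix s t assume "s \<in> S" "t \<in> N" "conn_in E (XB - AC \<inter> XB) s t"
    hence c: "?P\<^sup>*\<^sup>* s t" "s \<in> W" "t \<in> W" using conn by auto
    have "s \<in> AB" using A_AB R_AB \<open>s \<in> S\<close> that c by blast
    hence "t \<in> AB" using inv_AB[OF g occ pX pA c(1) W] by blast
    thus False using AB_notN \<open>t \<in> N\<close> by blast
  qed
  have sNX: "separates E XB (AC \<inter> XB) N S" if "S = A \<or> S = R" for S
    unfolding separates_def
  proof (intro ballI notI)
    fix s t assume "s \<in> N" "t \<in> S" "conn_in E (XB - AC \<inter> XB) s t"
    hence c: "?P\<^sup>*\<^sup>* s t" "s \<in> W" "t \<in> W" using conn by auto
    have "s \<in> AR" using N_AR \<open>s \<in> N\<close> c by blast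
    hence "t \<in> AR" using inv_AR[OF g occ c(1) W] by blast
    thus False using AR_notAR \<open>t \<in> S\<close> that by blast
  qed
  have minY: "card (AC \<inter> XB) \<le> card Y" if Y: "Y \<subseteq> XB" "separates E XB Y A R" for Y
  proof -
    let ?C = "\<lambda>v. \<exists>r\<in>R. conn_in E (XB - Y) v r"
    define gc where "gc v = (if v \<in> XB then (if ?C v then fX v else \<not> fX v) else fA v)" for v
    define X where "X = (AC - XB) \<union> (Y \<inter> (AB \<union> AC))"
    define S where "S = (AB \<union> AC) - X"
    have Sin: "v \<in> S \<Longrightarrow> (v \<in> XB \<and> v \<notin> Y) \<or> (v \<notin> XB \<and> v \<in> AB)" for v
      unfolding S_def X_def by blast
    let ?Q = "\<lambda>u v. E u v \<and> u \<in> XB - Y \<and> v \<in> XB - Y"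
    have cross: "gc u \<noteq> gc v" if "u \<in> XB" "u \<notin> Y" "v \<notin> XB" "v \<in> AB" "E u v" for u v
    proof -
      have "v \<in> V" using inV that by blast
      have "v \<notin> XR" using occX that unfolding OCC_def by blast
      hence "v \<in> XC" using occX \<open>v \<in> V\<close> that unfolding OCC_def by blast
      have cuu: "conn_in E (XB - Y) u u" unfolding conn_in_def using that by blast
      show ?thesis
      proof (cases "fX u = fA v")
        case True
        hence "u \<in> A" unfolding A_def using that \<open>v \<in> XC\<close> by blast
        hence "\<not> ?C u" using Y(2) unfolding separates_def by blast
        thus ?thesis unfolding gc_def using that True by simp
      next
        case False
        hence "u \<in> R" unfolding R_def using that \<open>v \<in> XC\<close> by blast
        hence "?C u" using cuu by blast
        thus ?thesis unfolding gc_def using that False by simp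
      qed
    qed
    have "proper_2col E S gc"
      unfolding proper_2col_def
    proof (intro ballI impI)
      fix u v assume u: "u \<in> S" and v: "v \<in> S" and e: "E u v"
      show "gc u \<noteq> gc v"
      proof (cases "u \<in> XB")
        case uX: True
        show ?thesis
        proof (cases "v \<in> XB")
          case True
          have uv: "?Q\<^sup>*\<^sup>* u v" using e uX True Sin u v by auto
          have vu: "?Q\<^sup>*\<^sup>* v u" using e uX True Sin u v sym by auto
          have "?C u = ?C v"
          proof
            assume "?C u"
            then obtain r where "r \<in> R" "conn_in E (XB - Y) u r" by blast
            hence "conn_in E (XB - Y) v r" using vu True Sin v unfolding conn_in_def
              by (meson Diff_iff rtranclp_trans)
            thus "?C v" using \<open>r \<in> R\<close> by blast
          next
            assume "?C v"
            then obtain r where "r \<in> R" "conn_in E (XB - Y) v r" by blast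
            hence "conn_in E (XB - Y) u r" using uv uX Sin u unfolding conn_in_def
              by (meson Diff_iff rtranclp_trans)
            thus "?C u" using \<open>r \<in> R\<close> by blast
          qed
          moreover have "fX u \<noteq> fX v" using pX uX True e unfolding proper_2col_def by blast
          ultimately show ?thesis unfolding gc_def using uX True by auto
        next
          case False
          show ?thesis using cross[of u v] uX False Sin u v e by blast
        qed
      next
        case uX: False
        show ?thesis
        proof (cases "v \<in> XB")
          case True
          show ?thesis using cross[of v u] uX True Sin u v e sym by metis
        next
          case False
          have "fA u \<noteq> fA v" using pA uX False Sin u v e unfolding proper_2col_def by blast
          thus ?thesis unfolding gc_def using uX False by simp
        qed
      qed
    qed
    hence bip: "bipartite_on E ((AB \<union> AC) - X)" unfolding bipartite_on_def S_def by blast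
    have XS: "X \<subseteq> AB \<union> AC" unfolding X_def by blast
    have ABV: "AC \<subseteq> V" "AB \<subseteq> V" using occ unfolding OCC_def by auto
    have finAC: "finite AC" "finite AB" using finV ABV by (auto intro: finite_subset)
    have finY: "finite Y" using Y(1) XBV finV by (auto intro: finite_subset)
    have finset: "finite {card X | X. X \<subseteq> AB \<union> AC \<and> bipartite_on E (AB \<union> AC - X)}"
    proof -
      have "{card X | X. X \<subseteq> AB \<union> AC \<and> bipartite_on E (AB \<union> AC - X)} \<subseteq> card ` Pow (AB \<union> AC)"
        by blast
      thus ?thesis using finAC finite_subset by blast
    qed
    have "oct E (AB \<union> AC) \<le> card X"
      unfolding oct_def using finset XS bip by (intro Min_le) auto
    also have "card X \<le> card (AC - XB) + card (Y \<inter> (AB \<union> AC))"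
      unfolding X_def by (rule card_Un_le)
    also have "\<dots> \<le> card (AC - XB) + card Y"
      using finY by (simp add: card_mono)
    finally have "card AC \<le> card (AC - XB) + card Y" using tight by simp
    moreover have "card AC = card (AC \<inter> XB) + card (AC - XB)"
      using card_Int_Diff[OF finAC(1)] by blast
    ultimately show ?thesis by simp
  qed
  have sub: "AC \<inter> XB \<subseteq> XB" by blast
  have F1: "family_sep E XB [A, R] (AC \<inter> XB)"
    unfolding family_sep_def
  proof (intro conjI sub allI impI)
    fix i j assume "i < length [A, R]" "j < length [A, R]" "i \<noteq> j"
    hence "(i = 0 \<and> j = 1) \<or> (i = 1 \<and> j = 0)" by auto
    thus "separates E XB (AC \<inter> XB) ([A, R] ! i) ([A, R] ! j)" using sAR sRA by auto
  qed
  have F2: "family_sep E XB [A, R, N] (AC \<inter> XB)"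
    unfolding family_sep_def
  proof (intro conjI sub allI impI)
    fix i j assume "i < length [A, R, N]" "j < length [A, R, N]" "i \<noteq> j"
    hence ij: "i < 3" "j < 3" "i \<noteq> j" by auto
    have "i = 0 \<or> i = 1 \<or> i = 2" "j = 0 \<or> j = 1 \<or> j = 2" using ij by linarith+
    moreover have "separates E XB (AC \<inter> XB) A N" "separates E XB (AC \<inter> XB) R N"
      "separates E XB (AC \<inter> XB) N A" "separates E XB (AC \<inter> XB) N R"
      using sXN sNX by blast+
    ultimately show "separates E XB (AC \<inter> XB) ([A, R, N] ! i) ([A, R, N] ! j)"
      using sAR sRA ij(3) by (elim disjE) simp_all
  qed
  have M1: "card (AC \<inter> XB) \<le> card Y" if "family_sep E XB [A, R] Y" for Y
  proof -
    have "Y \<subseteq> XB" using that unfolding family_sep_def by blast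
    moreover have "separates E XB Y ([A, R] ! 0) ([A, R] ! 1)"
      using that unfolding family_sep_def
      by (metis One_nat_def Suc_less_eq length_Cons list.size(3) nat.distinct(1) zero_less_Suc)
    ultimately show ?thesis using minY by simp
  qed
  have M2: "card (AC \<inter> XB) \<le> card Y" if "family_sep E XB [A, R, N] Y" for Y
  proof -
    have "Y \<subseteq> XB" using that unfolding family_sep_def by blast
    moreover have "separates E XB Y ([A, R, N] ! 0) ([A, R, N] ! 1)"
      using that unfolding family_sep_def
      by (metis One_nat_def Suc_less_eq length_Cons list.size(3) nat.distinct(1) zero_less_Suc)
    ultimately show ?thesis using minY by simp
  qed
  show ?thesis unfolding min_family_sep_def using F1 F2 M1 M2 by blast
qed

end
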